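(* Let $\nu$ be a class (ii) distribution with associated functions $f,\varphi,\Phi$ and assume one of the following: (i) $\Phi^{-1}$ is pseudo-regularly varying; (ii) $\nu$ is a Weibull distribution with shape $k\in(0,1)$ and scale $\lambda>0$ (with $\Phi(x)=(x/\lambda)^k$); (iii) $\nu$ is a generalized lognormal distribution with $r>1$ (with $\Phi(x)=\frac{1}{r\sigma^r}\log(x)^r$). Let $\theta>1$ and let $\eta$ be a distribution with density $g$ such that $\liminf_{x\to\infty}x^{t+1}g(x)>0$ for some $t\in(1,\theta)$. Then $D_{F_\Phi}(\eta|\nu)=\infty$.
   Context: Densities are written $f=e^{-\varphi}$. For strictly convex $F$ with $F(1)=0$, $D_F(\eta|\nu)=\int_0^\infty F(g/f)f\,dx$ if $\eta\ll\nu$ and $+\infty$ otherwise. Class (ii): $\lim_{x\to\infty}\varphi(x)/x=0$, $\lim_{x\to\infty}\varphi(x)/\log x=\infty$, and there exist $\bar x>0$ and $\Phi:\mathbb R_+\to\mathbb R$ positive, strictly concave, twice differentiable and increasing on $[\bar x,\infty)$ such that, with $\Phi^{-1}$ the inverse of $\Phi|_{[\bar x,\infty)}$, $0<\liminf_{x\to\infty}\Phi^{-1}(\varphi(x))/x\le\limsup_{x\to\infty}\Phi^{-1}(\varphi(x))/x<\infty$. With $\bar y=\exp(\Phi(\bar x))$: $F_\Phi(y)=y\log y$ for $y\le\bar y$ and $F_\Phi(y)=a\,y\,\Phi^{-1}(\log y)^\theta+b$ for $y>\bar y$, where $a=\frac{1+\log\bar y}{\Phi^{-1}(\log\bar y)^\theta+\theta\Phi^{-1}(\log\bar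 y)^{\theta-1}(\Phi^{-1})'(\log\bar y)}$, $b=\bar y\log\bar y-a\bar y\Phi^{-1}(\log\bar y)^\theta$. A measurable $h:\mathbb R_+\to(0,\infty)$ is pseudo-regularly varying if $\limsup_{c\to1}\limsup_{x\to\infty}h(cx)/h(x)=1$. The Weibull density with scale $\lambda>0$, shape $k\in(0,1)$ is $f(x)=\frac{k}{\lambda}(x/\lambda)^{k-1}e^{-(x/\lambda)^k}$ for $x\ge0$. The generalized lognormal density is $f(x)=\frac{1}{Zx}\exp\!\big(-\frac{1}{r\sigma^r}|\log x-\mu|^r\big)$, $x>0$, with $Z=2r^{1/r}\sigma\Gamma(1+1/r)$, $r>1$, $\sigma>0$, $\mu\in\mathbb R$. *)

theory Defs
  imports "HOL-Analysis.Analysis"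
begin

definition strictly_concave_on :: "real set \<Rightarrow> (real \<Rightarrow> real) \<Rightarrow> bool" where
  "strictly_concave_on S \<Phi> \<longleftrightarrow>
     (\<forall>x\<in>S. \<forall>y\<in>S. x \<noteq> y \<longrightarrow> (\<forall>t. 0 < t \<and> t < 1 \<longrightarrow>
        \<Phi> (t * x + (1 - t) * y) > t * \<Phi> x + (1 - t) * \<Phi> y))"

definition Phi_inv :: "(real \<Rightarrow> real) \<Rightarrow> real \<Rightarrow> real \<Rightarrow> real" where
  "Phi_inv \<Phi> xbar y = (THE x. xbar \<le> x \<and> \<Phi> x = y)"

text \<open>The function F_Phi (depending on Phi, xbar and theta).
  The derivative of the inverse at log ybar = Phi xbar is 1 / Phi'(xbar).\<close>
definition F_Phi :: "(real \<Rightarrow> real) \<Rightarrow> real \<Rightarrow> real \<Rightarrow> real \<Rightarrow> real" where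
  "F_Phi \<Phi> xbar \<theta> y =
     (let ybar = exp (\<Phi> xbar);
          Pinv = Phi_inv \<Phi> xbar;
          dPinv = 1 / deriv \<Phi> (Pinv (ln ybar));
          a = (1 + ln ybar) /
              (Pinv (ln ybar) powr \<theta> + \<theta> * Pinv (ln ybar) powr (\<theta> - 1) * dPinv);
          b = ybar * ln ybar - a * ybar * Pinv (ln ybar) powr \<theta>
      in if y \<le> ybar then y * ln y else a * y * Pinv (ln y) powr \<theta> + b)"

text \<open>F-divergence D_F(eta|nu) of the law with density g w.r.t. the law with
  (everywhere positive) density f on [0,infinity): the integral of F(g/f) f,
  as an extended real (positive part minus negative part).\<close>
definition F_div :: "(real \<Rightarrow> real) \<Rightarrow> (real \<Rightarrow> real) \<Rightarrow> (real \<Rightarrow> real) \<Rightarrow> ereal" where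
  "F_div F g f =
     enn2ereal (\<integral>\<^sup>+ x \<in> {0..}. ennreal (F (g x / f x) * f x) \<partial>lborel)
     - enn2ereal (\<integral>\<^sup>+ x \<in> {0..}. ennreal (- (F (g x / f x) * f x)) \<partial>lborel)"

definition pseudo_regularly_varying :: "(real \<Rightarrow> real) \<Rightarrow> bool" where
  "pseudo_regularly_varying h \<longleftrightarrow>
     Limsup (at 1) (\<lambda>c. Limsup at_top (\<lambda>x. ereal (h (c * x) / h x))) = 1"

end

theory Submission
  imports Defs "HOL-Real_Asymp.Real_Asymp"
begin


lemma nn_inv_x_inf:
  fixes K X :: real
  assumes K: "K > 0" and X: "X > 0"
  shows "(\<integral>\<^sup>+x. ennreal (K / x) * indicator {X..} x \<partial>lborel) = \<infinity>"
proof (rule ccontr)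
  define I where "I = (\<integral>\<^sup>+x. ennreal (K / x) * indicator {X..} x \<partial>lborel)"
  assume "(\<integral>\<^sup>+x. ennreal (K / x) * indicator {X..} x \<partial>lborel) \<noteq> \<infinity>"
  then have "I \<noteq> \<infinity>" unfolding I_def .
  then obtain r where r: "I = ennreal r" "r \<ge> 0" by (cases I) auto
  have bound: "ennreal (K * ln B - K * ln X) \<le> I" if B: "B \<ge> X" for B
  proof -
    have "((\<lambda>x. K / x) has_integral (K * ln B - K * ln X)) {X..B}"
    proof -
      have "((\<lambda>x. K / x) has_integral ((\<lambda>x. K * ln x) B - (\<lambda>x. K * ln x) X)) {X..B}"
      proof (rule fundamental_theorem_of_calculus)
        show "X \<le> B" using B .
        fix x assume "x \<in> {X..B}"
          then have "x > 0" using X by auto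
          then have "((\<lambda>x. K * ln x) has_real_derivative K * (1/x)) (at x)"
            by (auto intro!: derivative_eq_intros)
          then show "((\<lambda>x. K * ln x) has_vector_derivative K / x) (at x within {X..B})"
            by (simp add: has_real_derivative_iff_has_vector_derivative has_vector_derivative_at_within)
      qed
      then show ?thesis by simp
    qed
    note hi = this
    have eq: "(\<integral>\<^sup>+x. ennreal (K / x) * indicator {X..B} x \<partial>lborel) = ennreal (K * ln B - K * ln X)"
      using nn_integral_has_integral_lebesgue'[OF _ hi] K X by auto
    have "(\<integral>\<^sup>+x. ennreal (K / x) * indicator {X..B} x \<partial>lborel) \<le> I" unfolding I_def
      by (rule nn_integral_mono) (auto simp: indicator_def)
    then show ?thesis using eq by simp
  qed
  define B where "B = exp ((r + 1) / K + ln X)"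
  have "ln B = (r+1)/K + ln X" unfolding B_def by simp
  then have "K * ln B - K * ln X = r + 1" using K by (simp add: field_simps)
  moreover have "B \<ge> X"
  proof -
    have "X = exp (ln X)" using X by simp
    also have "\<dots> \<le> B" unfolding B_def using r K by (simp add: divide_nonneg_pos)
    finally show ?thesis .
  qed
  ultimately have "ennreal (r + 1) \<le> ennreal r" using bound r by metis
  then show False using r by (simp add: ennreal_le_iff)
qed

lemma Pinv_Phi:
  assumes mono: "strict_mono_on {xbar..} \<Phi>" and x: "xbar \<le> x"
  shows "Phi_inv \<Phi> xbar (\<Phi> x) = x"
  unfolding Phi_inv_def
proof (rule the_equality)
  show "xbar \<le> x \<and> \<Phi> x = \<Phi> x" using x by simp
  fix y assume "xbar \<le> y \<and> \<Phi> y = \<Phi> x"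
  then show "y = x" using strict_mono_on_eqD[OF mono, of y x] x by auto
qed

lemma Pinv_basic:
  assumes mono: "strict_mono_on {xbar..} \<Phi>" and cont: "continuous_on {xbar..} \<Phi>"
    and unb: "\<forall>M. \<exists>x\<ge>xbar. M < \<Phi> x" and v: "\<Phi> xbar \<le> v"
  shows "xbar \<le> Phi_inv \<Phi> xbar v \<and> \<Phi> (Phi_inv \<Phi> xbar v) = v"
proof -
  obtain x1 where x1: "xbar \<le> x1" "v < \<Phi> x1" using unb by blast
  have "continuous_on {xbar..x1} \<Phi>" using cont by (rule continuous_on_subset) auto
  then obtain x where x: "xbar \<le> x" "x \<le> x1" "\<Phi> x = v"
    using IVT'[of \<Phi> xbar v x1] v x1 by auto
  then have "Phi_inv \<Phi> xbar v = x" using Pinv_Phi[OF mono x(1)] by simp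
  then show ?thesis using x by simp
qed

lemma Pinv_mono:
  assumes mono: "strict_mono_on {xbar..} \<Phi>" and cont: "continuous_on {xbar..} \<Phi>"
    and unb: "\<forall>M. \<exists>x\<ge>xbar. M < \<Phi> x" and v: "\<Phi> xbar \<le> v" and vw: "v \<le> w"
  shows "Phi_inv \<Phi> xbar v \<le> Phi_inv \<Phi> xbar w"
proof (rule ccontr)
  assume "\<not> ?thesis"
  then have lt: "Phi_inv \<Phi> xbar w < Phi_inv \<Phi> xbar v" by simp
  have a: "xbar \<le> Phi_inv \<Phi> xbar v \<and> \<Phi> (Phi_inv \<Phi> xbar v) = v"
    using Pinv_basic[OF mono cont unb v] .
  have b: "xbar \<le> Phi_inv \<Phi> xbar w \<and> \<Phi> (Phi_inv \<Phi> xbar w) = w"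
    using Pinv_basic[OF mono cont unb] v vw by auto
  have "\<Phi> (Phi_inv \<Phi> xbar w) < \<Phi> (Phi_inv \<Phi> xbar v)"
    using strict_mono_onD[OF mono _ _ lt] a b by auto
  then show False using a b vw by simp
qed

lemma asymp_weibull:
  fixes k s lam kap t C :: real
  assumes "0<k" "k<1" "0 < s" "s < 1" "0<lam" "0 < kap"
  shows "eventually (\<lambda>x::real. (x powr s/lam) powr k \<le> (kap*x/lam) powr k - (t+1) * ln x + C) at_top"
proof -
  have "eventually (\<lambda>x::real. (kap*x/lam) powr k - (x powr s/lam) powr k - (t+1) * ln x + C \<ge> 0) at_top"
    using assms by real_asymp
  then show ?thesis by eventually_elim simp
qed

lemma asymp_lognormal_u:
  fixes r q lk B C :: real
  assumes "1<r" "0 < q" "q < 1"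
  shows "eventually (\<lambda>u::real. (u + lk) powr r - q * u powr r - B * u + C \<ge> 0) at_top"
  using assms by real_asymp

lemma asymp_lin:
  fixes s kap :: real
  assumes "0 < s" "s < 1" "0 < kap"
  shows "eventually (\<lambda>x::real. x powr s \<le> kap * x / 2) at_top"
proof -
  have "eventually (\<lambda>x::real. kap * x / 2 - x powr s \<ge> 0) at_top"
    using assms by real_asymp
  then show ?thesis by eventually_elim simp
qed

lemma pointwise_bound:
  fixes F Q :: "real \<Rightarrow> real"
  assumes x: "1 \<le> x" and c: "0 < c" and a: "0 < a" and th: "0 < \<theta>" and s: "0 \<le> s"
    and st: "s * \<theta> = t"
    and gx: "c < x powr (t+1) * gx"
    and phx: "2 * ln x \<le> ph"
    and v: "\<Phi>0 < ph - (t+1) * ln x + ln c"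
    and Pv: "x powr s \<le> Q (ph - (t+1) * ln x + ln c)"
    and Qmono: "\<And>u w. \<Phi>0 \<le> u \<Longrightarrow> u \<le> w \<Longrightarrow> Q u \<le> Q w"
    and bb: "2 * \<bar>b\<bar> \<le> a * c * x"
    and Feq: "\<And>y. y > exp \<Phi>0 \<Longrightarrow> F y = a * y * Q (ln y) powr \<theta> + b"
  shows "a * c / 2 / x \<le> F (gx / exp (- ph)) * exp (- ph)"
proof -
  have xpos: "x > 0" using x by simp
  have xt1: "x powr (t+1) > 0" using xpos by simp
  have g_low: "gx > c / x powr (t+1)" using gx xt1 by (simp add: field_simps)
  have gpos: "gx > 0" using g_low c xt1 by (smt (verit) divide_pos_pos)
  define y where "y = gx / exp (- ph)"
  have y_eq: "y = gx * exp ph" unfolding y_def by (simp add: exp_minus field_simps)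
  have ypos: "y > 0" using gpos y_eq by simp
  have lny: "ln y = ln gx + ph" using y_eq gpos by (simp add: ln_mult)
  have "ln (c / x powr (t+1)) \<le> ln gx" using g_low c xt1 gpos by simp
  moreover have "ln (c / x powr (t+1)) = ln c - (t+1) * ln x"
    using c xpos by (simp add: ln_div ln_powr)
  ultimately have lny_ge: "ph - (t+1) * ln x + ln c \<le> ln y" using lny by linarith
  have "\<Phi>0 < ln y" using v lny_ge by linarith
  then have "exp \<Phi>0 < y" using ypos by (metis exp_less_cancel_iff exp_ln)
  then have Fy: "F y = a * y * Q (ln y) powr \<theta> + b" using Feq by simp
  have Qy: "x powr s \<le> Q (ln y)" using Pv Qmono[OF less_imp_le[OF v] lny_ge] by linarith
  have "x powr t = (x powr s) powr \<theta>" using st by (simp add: powr_powr)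
  also have "\<dots> \<le> Q (ln y) powr \<theta>" using Qy th by (intro powr_mono2) auto
  finally have Qt: "x powr t \<le> Q (ln y) powr \<theta>" .
  have yf: "y * exp (- ph) = gx" unfolding y_def by simp
  have "F y * exp (- ph) = a * gx * Q (ln y) powr \<theta> + b * exp (- ph)"
    using Fy yf by (simp add: algebra_simps)
  moreover have "a * gx * Q (ln y) powr \<theta> \<ge> a * c / x"
  proof -
    have "a * c / x = a * (c / x powr (t+1)) * x powr t"
      using xpos by (simp add: powr_add field_simps)
    also have "\<dots> \<le> a * gx * x powr t" using g_low a xpos by (intro mult_right_mono mult_left_mono) auto
    also have "\<dots> \<le> a * gx * Q (ln y) powr \<theta>" using Qt a gpos by (intro mult_left_mono) auto
    finally show ?thesis .
  qed
  moreover have "b * exp (- ph) \<ge> - (a * c / 2 / x)"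
  proof -
    have "exp (- ph) \<le> exp (- (2 * ln x))" using phx by simp
    also have "exp (- (2 * ln x)) = inverse (exp (2 * ln x))" by (rule exp_minus)
    also have "exp (2 * ln x) = x * x" using xpos by (metis exp_add exp_ln mult_2)
    finally have e: "exp (- ph) \<le> inverse (x * x)" .
    have "\<bar>b\<bar> * exp (- ph) \<le> \<bar>b\<bar> * inverse (x * x)" using e by (intro mult_left_mono) auto
    also have "\<bar>b\<bar> * inverse (x * x) = (\<bar>b\<bar> / x) / x" by (simp add: divide_inverse)
    also have "\<dots> \<le> a * c / 2 / x"
    proof (intro divide_right_mono)
      show "\<bar>b\<bar> / x \<le> a * c / 2" using bb xpos by (simp add: divide_le_eq mult.commute)
    qed (use xpos in simp)
    finally have "\<bar>b\<bar> * exp (- ph) \<le> a * c / 2 / x" .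
    moreover have "- (\<bar>b\<bar> * exp (- ph)) \<le> b * exp (- ph)" by (simp add: abs_if)
    ultimately show ?thesis by linarith
  qed
  ultimately have "F y * exp (- ph) \<ge> a * c / x - a * c / 2 / x" by linarith
  moreover have "a * c / x - a * c / 2 / x = a * c / 2 / x" by (simp add: field_simps)
  ultimately show ?thesis unfolding y_def by simp
qed


lemma asymp_powr_big:
  fixes s B :: real
  assumes "0 < s"
  shows "eventually (\<lambda>x::real. B \<le> x powr s) at_top"
  using assms by real_asymp


theorem proposition4p5:
  fixes \<phi> \<Phi> g :: "real \<Rightarrow> real" and xbar \<theta> :: real
  assumes phi_meas: "\<phi> \<in> borel_measurable borel"
    and nu_prob: "(\<integral>\<^sup>+ x \<in> {0..}. ennreal (exp (- \<phi> x)) \<partial>lborel) = 1"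
    and lim1: "((\<lambda>x. \<phi> x / x) \<longlongrightarrow> 0) at_top"
    and lim2: "filterlim (\<lambda>x. \<phi> x / ln x) at_top at_top"
    and xbar_pos: "xbar > 0"
    and Phi_pos: "\<forall>x\<ge>xbar. \<Phi> x > 0"
    and Phi_conc: "strictly_concave_on {xbar..} \<Phi>"
    and Phi_diff: "\<forall>x\<ge>xbar. \<Phi> differentiable at x"
    and Phi_diff2: "\<forall>x\<ge>xbar. deriv \<Phi> differentiable at x"
    and Phi_incr: "strict_mono_on {xbar..} \<Phi>"
    and liminf_pos: "0 < Liminf at_top (\<lambda>x. ereal (Phi_inv \<Phi> xbar (\<phi> x) / x))"
    and limsup_fin: "Limsup at_top (\<lambda>x. ereal (Phi_inv \<Phi> xbar (\<phi> x) / x)) < \<infinity>"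
    and cases:
      "pseudo_regularly_varying (Phi_inv \<Phi> xbar)
       \<or> (\<exists>k lam. 0 < k \<and> k < 1 \<and> 0 < lam \<and>
            (\<forall>x>0. exp (- \<phi> x) = k / lam * (x / lam) powr (k - 1) * exp (- ((x / lam) powr k))) \<and>
            (\<forall>x\<ge>0. \<Phi> x = (x / lam) powr k))
       \<or> (\<exists>r \<sigma> \<mu>. 1 < r \<and> 0 < \<sigma> \<and>
            (\<forall>x>0. exp (- \<phi> x) =
               1 / (2 * r powr (1 / r) * \<sigma> * Gamma (1 + 1 / r) * x) *
               exp (- (1 / (r * \<sigma> powr r)) * \<bar>ln x - \<mu>\<bar> powr r)) \<and>
            (\<forall>x\<ge>1. \<Phi> x = 1 / (r * \<sigma> powr r) * ln x powr r))"
    and theta: "\<theta> > 1"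
    and g_meas: "g \<in> borel_measurable borel"
    and g_nonneg: "\<forall>x\<ge>0. g x \<ge> 0"
    and eta_prob: "(\<integral>\<^sup>+ x \<in> {0..}. ennreal (g x) \<partial>lborel) = 1"
    and g_tail: "\<exists>t. 1 < t \<and> t < \<theta> \<and> 0 < Liminf at_top (\<lambda>x. ereal (x powr (t + 1) * g x))"
  shows "F_div (F_Phi \<Phi> xbar \<theta>) g (\<lambda>x. exp (- \<phi> x)) = \<infinity>"
proof -
  define P where "P = Phi_inv \<Phi> xbar"
  have cont: "continuous_on {xbar..} \<Phi>"
    by (intro continuous_at_imp_continuous_on ballI)
       (use Phi_diff in \<open>auto intro: differentiable_imp_continuous_within\<close>)
  have phi_big: "eventually (\<lambda>x. B * ln x \<le> \<phi> x) at_top" for B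
  proof -
    have "eventually (\<lambda>x. B \<le> \<phi> x / ln x) at_top" using lim2 by (simp add: filterlim_at_top)
    moreover have "eventually (\<lambda>x::real. x > 1) at_top" by (rule eventually_gt_at_top)
    ultimately show ?thesis
    proof eventually_elim
      case (elim x)
      then have "ln x > 0" by simp
      then show ?case using elim by (simp add: pos_le_divide_eq)
    qed
  qed
  have phi_top: "filterlim \<phi> at_top at_top"
  proof (rule filterlim_at_top_mono[OF ln_at_top])
    show "eventually (\<lambda>x. ln x \<le> \<phi> x) at_top" using phi_big[of 1] by simp
  qed
  have unb: "\<forall>M. \<exists>x\<ge>xbar. M < \<Phi> x"
  proof (rule ccontr)
    assume "\<not> ?thesis"
    then obtain M where "\<forall>x\<ge>xbar. \<not> M < \<Phi> x" by blast
    then have M: "\<And>x. xbar \<le> x \<Longrightarrow> \<Phi> x \<le> M" by (simp add: not_less)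
    define C0 where "C0 = (THE z::real. False)"
    have ev: "eventually (\<lambda>x. M + 1 \<le> \<phi> x) at_top" using phi_top by (simp add: filterlim_at_top)
    have eqf: "eventually (\<lambda>x. ereal (C0 / x) = ereal (Phi_inv \<Phi> xbar (\<phi> x) / x)) at_top"
      using ev
    proof eventually_elim
      case (elim x)
      have "(\<lambda>z. xbar \<le> z \<and> \<Phi> z = \<phi> x) = (\<lambda>z. False)"
      proof (rule ext)
        fix z
        show "(xbar \<le> z \<and> \<Phi> z = \<phi> x) = False" using M[of z] elim by auto
      qed
      then have "Phi_inv \<Phi> xbar (\<phi> x) = C0" unfolding Phi_inv_def C0_def by (simp only:)
      then show ?case by simp
    qed
    have tc: "((\<lambda>x. ereal (C0 / x)) \<longlongrightarrow> ereal 0) at_top"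
      by (intro tendsto_intros tendsto_divide_0[OF tendsto_const] filterlim_at_top_imp_at_infinity filterlim_ident)
    have "((\<lambda>x. ereal (Phi_inv \<Phi> xbar (\<phi> x) / x)) \<longlongrightarrow> ereal 0) at_top"
      by (rule Lim_transform_eventually[OF tc eqf])
    then have "Liminf at_top (\<lambda>x. ereal (Phi_inv \<Phi> xbar (\<phi> x) / x)) = ereal 0"
      by (intro lim_imp_Liminf) simp_all
    then show False using liminf_pos by simp
  qed
  have Pb: "\<And>v. \<Phi> xbar \<le> v \<Longrightarrow> xbar \<le> P v \<and> \<Phi> (P v) = v"
    unfolding P_def using Pinv_basic[OF Phi_incr cont unb] by blast
  have Pm: "\<And>v w. \<Phi> xbar \<le> v \<Longrightarrow> v \<le> w \<Longrightarrow> P v \<le> P w"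
    unfolding P_def using Pinv_mono[OF Phi_incr cont unb] by blast
  have PPhi: "\<And>x. xbar \<le> x \<Longrightarrow> P (\<Phi> x) = x"
    unfolding P_def using Pinv_Phi[OF Phi_incr] by blast
  have dnonneg: "0 \<le> deriv \<Phi> xbar"
  proof (rule ccontr)
    assume "\<not> ?thesis"
    then have neg: "deriv \<Phi> xbar < 0" by simp
    have "(\<Phi> has_real_derivative deriv \<Phi> xbar) (at xbar)"
      using Phi_diff xbar_pos by (simp add: DERIV_deriv_iff_real_differentiable)
    from has_real_derivative_neg_dec_right[OF this neg] obtain d where
      d: "d > 0" "\<forall>h>0. xbar + h \<in> UNIV \<longrightarrow> h < d \<longrightarrow> \<Phi> xbar > \<Phi> (xbar + h)" by blast
    then have "\<Phi> (xbar + d/2) < \<Phi> xbar" by auto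
    moreover have "\<Phi> xbar < \<Phi> (xbar + d/2)"
      using strict_mono_onD[OF Phi_incr, of xbar "xbar + d/2"] d by auto
    ultimately show False by simp
  qed
  define ybar where "ybar = exp (\<Phi> xbar)"
  define a where "a = (1 + \<Phi> xbar) / (xbar powr \<theta> + \<theta> * xbar powr (\<theta> - 1) * (1 / deriv \<Phi> xbar))"
  define b where "b = ybar * \<Phi> xbar - a * ybar * xbar powr \<theta>"
  have P0: "P (\<Phi> xbar) = xbar" using PPhi by simp
  have Feq: "F_Phi \<Phi> xbar \<theta> y = (if y \<le> ybar then y * ln y else a * y * P (ln y) powr \<theta> + b)" for y
    unfolding F_Phi_def Let_def ybar_def a_def b_def P_def[symmetric] using P0 by simp
  have a_pos: "0 < a"
  proof -
    have "0 < \<Phi> xbar" using Phi_pos by simp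
    then have "0 < 1 + \<Phi> xbar" by simp
    moreover have "0 < xbar powr \<theta> + \<theta> * xbar powr (\<theta> - 1) * (1 / deriv \<Phi> xbar)"
    proof -
      have "0 < xbar powr \<theta>" using xbar_pos by simp
      moreover have "0 \<le> \<theta> * xbar powr (\<theta> - 1) * (1 / deriv \<Phi> xbar)"
        using theta dnonneg by simp
      ultimately show ?thesis by linarith
    qed
    ultimately show ?thesis unfolding a_def by simp
  qed
  have F_ge: "- 1 \<le> F_Phi \<Phi> xbar \<theta> y" if y: "0 \<le> y" for y
  proof (cases "y \<le> ybar")
    case True
    have "- 1 \<le> y * ln y"
    proof (cases "y = 0")
      case False
      then have yp: "y > 0" using y by simp
      have "ln (1/y) \<le> 1/y - 1" using yp by (intro ln_le_minus_one) simp
      then have "- ln y \<le> 1/y - 1" using yp by (simp add: ln_div)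
      then have "y * (- ln y) \<le> y * (1/y - 1)" using yp by (intro mult_left_mono) auto
      moreover have "y * (1/y - 1) = 1 - y" using yp by (simp add: field_simps)
      ultimately have "- (y * ln y) \<le> 1 - y" by simp
      then show ?thesis using yp by linarith
    qed simp
    then show ?thesis using True Feq by simp
  next
    case False
    then have yb: "ybar < y" by simp
    have ybpos: "0 < ybar" unfolding ybar_def by simp
    have "\<Phi> xbar < ln y" using yb ybpos unfolding ybar_def by (metis exp_less_cancel_iff exp_ln less_trans)
    then have "xbar \<le> P (ln y)" using Pb by simp
    then have "xbar powr \<theta> \<le> P (ln y) powr \<theta>" using xbar_pos theta by (intro powr_mono2) auto
    then have "a * ybar * xbar powr \<theta> \<le> a * y * P (ln y) powr \<theta>"
      using a_pos yb ybpos by (intro mult_mono) (auto intro: mult_mono)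
    moreover have "a * ybar * xbar powr \<theta> + b = ybar * \<Phi> xbar" unfolding b_def by simp
    moreover have "0 \<le> ybar * \<Phi> xbar"
    proof -
      have "0 < \<Phi> xbar" using Phi_pos by simp
      then show ?thesis using ybpos by simp
    qed
    ultimately show ?thesis using False Feq by simp
  qed
  define f where "f = (\<lambda>x. exp (- \<phi> x))"
  define FF where "FF = F_Phi \<Phi> xbar \<theta>"
  have neg_fin: "(\<integral>\<^sup>+ x \<in> {0..}. ennreal (- (FF (g x / f x) * f x)) \<partial>lborel) \<noteq> \<infinity>"
  proof -
    have "(\<integral>\<^sup>+ x \<in> {0..}. ennreal (- (FF (g x / f x) * f x)) \<partial>lborel)
          \<le> (\<integral>\<^sup>+ x \<in> {0..}. ennreal (f x) \<partial>lborel)"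
    proof (rule nn_integral_mono)
      fix x
      show "ennreal (- (FF (g x / f x) * f x)) * indicator {0..} x \<le> ennreal (f x) * indicator {0..} x"
      proof (cases "x \<in> {0..}")
        case True
        have fpos: "0 < f x" unfolding f_def by simp
        have "0 \<le> g x" using g_nonneg True by simp
        then have "0 \<le> g x / f x" using fpos by simp
        then have "- 1 \<le> F_Phi \<Phi> xbar \<theta> (g x / f x)" by (rule F_ge)
        then have "- FF (g x / f x) \<le> 1" unfolding FF_def by simp
        then have "(- FF (g x / f x)) * f x \<le> 1 * f x" by (rule mult_right_mono) (use fpos in simp)
        then have "- (FF (g x / f x) * f x) \<le> f x" by simp
        then have "ennreal (- (FF (g x / f x) * f x)) \<le> ennreal (f x)" by (rule ennreal_leI)
        then show ?thesis using True by (simp add: indicator_def)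
      qed simp
    qed
    also have "\<dots> = 1" using nu_prob unfolding f_def .
    finally have "(\<integral>\<^sup>+ x \<in> {0..}. ennreal (- (FF (g x / f x) * f x)) \<partial>lborel) < top"
      using ennreal_one_less_top by (rule le_less_trans)
    then show ?thesis by simp
  qed
  obtain t where t: "1 < t" "t < \<theta>" "0 < Liminf at_top (\<lambda>x. ereal (x powr (t + 1) * g x))"
    using g_tail by blast
  obtain c where c: "0 < ereal c" "ereal c < Liminf at_top (\<lambda>x. ereal (x powr (t + 1) * g x))"
    using ereal_dense2[OF t(3)] by blast
  have cpos: "0 < c" using c by simp
  have gtail: "eventually (\<lambda>x. c < x powr (t + 1) * g x) at_top"
    using less_LiminfD[OF c(2)] by simp
  define s where "s = t / \<theta>"
  have s: "0 < s" "s < 1" "s * \<theta> = t" using t theta unfolding s_def by (auto simp: field_simps)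
  define v where "v = (\<lambda>x. \<phi> x - (t+1) * ln x + ln c)"
  have v_top: "filterlim v at_top at_top"
  proof (rule filterlim_at_top_mono)
    show "filterlim (\<lambda>x. ln c + ln x) at_top at_top"
      by (rule filterlim_tendsto_add_at_top[OF tendsto_const ln_at_top])
    show "eventually (\<lambda>x. ln c + ln x \<le> v x) at_top"
      using phi_big[of "t + 2"] eventually_gt_at_top[of 1]
    proof eventually_elim
      case (elim x)
      then show ?case unfolding v_def by (simp add: algebra_simps)
    qed
  qed
  obtain kap where kap0: "0 < ereal kap" and kap2: "ereal kap < Liminf at_top (\<lambda>x. ereal (Phi_inv \<Phi> xbar (\<phi> x) / x))"
    using ereal_dense2[OF liminf_pos] by blast
  have kap: "0 < kap" "ereal kap < Liminf at_top (\<lambda>x. ereal (Phi_inv \<Phi> xbar (\<phi> x) / x))"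
    using kap0 kap2 by auto
  have kapev: "eventually (\<lambda>x. kap * x < P (\<phi> x)) at_top"
    using less_LiminfD[OF kap(2)] eventually_gt_at_top[of 0]
  proof eventually_elim
    case (elim x)
    then show ?case unfolding P_def by (simp add: field_simps)
  qed
  have KEY: "eventually (\<lambda>x. x powr s \<le> P (v x)) at_top"
  proof -
    have ph_ev: "eventually (\<lambda>x. \<Phi> xbar \<le> \<phi> x) at_top"
      using phi_top by (simp add: filterlim_at_top)
    have from_Phi: "eventually (\<lambda>x. x powr s \<le> P (v x)) at_top"
      if H: "eventually (\<lambda>x. \<Phi> (x powr s) \<le> \<Phi> (kap * x) - (t+1) * ln x + ln c) at_top"
    proof -
      have xs: "eventually (\<lambda>x. xbar \<le> x powr s) at_top"
        using asymp_powr_big[OF s(1)] .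
      have kx: "eventually (\<lambda>x. xbar \<le> kap * x) at_top"
        using eventually_ge_at_top[of "xbar / kap"]
      proof eventually_elim
        case (elim x)
        then show ?case using kap(1) by (simp add: field_simps)
      qed
      show ?thesis using H kapev xs kx ph_ev
      proof eventually_elim
        case (elim x)
        have PP: "xbar \<le> P (\<phi> x) \<and> \<Phi> (P (\<phi> x)) = \<phi> x" using Pb[OF elim(5)] .
        have "\<Phi> (kap * x) \<le> \<Phi> (P (\<phi> x))"
          using strict_mono_on_leD[OF Phi_incr, of "kap * x" "P (\<phi> x)"] elim(2) elim(4) PP by auto
        then have "\<Phi> (kap * x) \<le> \<phi> x" using PP by simp
        then have sv: "\<Phi> (x powr s) \<le> v x" using elim(1) unfolding v_def by linarith
        have "\<Phi> xbar \<le> \<Phi> (x powr s)"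
          using strict_mono_on_leD[OF Phi_incr, of xbar "x powr s"] elim(3) by auto
        then have "P (\<Phi> (x powr s)) \<le> P (v x)" using Pm sv by blast
        then show ?case using PPhi[OF elim(3)] by simp
      qed
    qed
    from cases consider (i) "pseudo_regularly_varying P"
      | (ii) k lam where "0 < k" "k < 1" "0 < lam" "\<forall>x\<ge>0. \<Phi> x = (x / lam) powr k"
      | (iii) r \<sigma> where "1 < r" "0 < \<sigma>" "\<forall>x\<ge>1. \<Phi> x = 1 / (r * \<sigma> powr r) * ln x powr r"
      unfolding P_def by blast
    then show ?thesis
    proof cases
      case ii
      show ?thesis
      proof (rule from_Phi)
        show "eventually (\<lambda>x. \<Phi> (x powr s) \<le> \<Phi> (kap * x) - (t+1) * ln x + ln c) at_top"
          using asymp_weibull[OF ii(1) ii(2) s(1) s(2) ii(3) kap(1), of t "ln c"] eventually_gt_at_top[of 0]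
        proof eventually_elim
          case (elim x)
          have "\<Phi> (x powr s) = (x powr s / lam) powr k" using ii(4) by simp
          moreover have "\<Phi> (kap * x) = (kap * x / lam) powr k" using ii(4) kap(1) elim(2) by simp
          ultimately show ?case using elim(1) by simp
        qed
      qed
    next
      case iii
      define A where "A = r * \<sigma> powr r"
      have A: "0 < A" unfolding A_def using iii by simp
      define q where "q = s powr r"
      have q: "0 < q" "q < 1"
        unfolding q_def using s iii powr_less_mono2[of r s 1] by auto
      have ev_u: "eventually (\<lambda>u. (u + ln kap) powr r - q * u powr r - A * (t+1) * u + A * ln c \<ge> 0) at_top"
        using asymp_lognormal_u[OF iii(1) q, of "ln kap" "A * (t+1)" "A * ln c"] .
      have ev_x: "eventually (\<lambda>x. (ln x + ln kap) powr r - q * ln x powr r - A * (t+1) * ln x + A * ln c \<ge> 0) at_top"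
        using filterlim_iff[THEN iffD1, OF ln_at_top, rule_format, OF ev_u] .
      show ?thesis
      proof (rule from_Phi)
        show "eventually (\<lambda>x. \<Phi> (x powr s) \<le> \<Phi> (kap * x) - (t+1) * ln x + ln c) at_top"
          using ev_x eventually_ge_at_top[of 1] eventually_ge_at_top[of "1 / kap"]
        proof eventually_elim
          case (elim x)
          have x0: "0 < x" using elim(2) by simp
          have lx: "0 \<le> ln x" using elim(2) by simp
          have kx1: "1 \<le> kap * x" using elim(3) kap(1) by (simp add: field_simps)
          have xs1: "1 \<le> x powr s" using elim(2) s(1) by (intro ge_one_powr_ge_zero) auto
          have "\<Phi> (x powr s) = 1 / A * ln (x powr s) powr r" using iii(3) xs1 unfolding A_def by simp
          also have "ln (x powr s) = s * ln x" using x0 by (simp add: ln_powr)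
          also have "(s * ln x) powr r = q * ln x powr r" unfolding q_def by (rule powr_mult)
          finally have e1: "\<Phi> (x powr s) = 1 / A * (q * ln x powr r)" .
          have "\<Phi> (kap * x) = 1 / A * ln (kap * x) powr r" using iii(3) kx1 unfolding A_def by simp
          also have "ln (kap * x) = ln x + ln kap" using x0 kap(1) by (simp add: ln_mult)
          finally have e2: "\<Phi> (kap * x) = 1 / A * (ln x + ln kap) powr r" .
          have "0 \<le> 1 / A * ((ln x + ln kap) powr r - q * ln x powr r - A * (t+1) * ln x + A * ln c)"
            using elim(1) A by simp
          also have "1 / A * ((ln x + ln kap) powr r - q * ln x powr r - A * (t+1) * ln x + A * ln c)
              = 1 / A * (ln x + ln kap) powr r - (t+1) * ln x + ln c - 1 / A * (q * ln x powr r)"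
            using A by (simp add: field_simps)
          finally show ?case using e1 e2 by linarith
        qed
      qed
    next
      case i
      let ?H = "\<lambda>C. Limsup at_top (\<lambda>w. ereal (P (C * w) / P w))"
      have "Limsup (at 1) ?H = 1" using i unfolding pseudo_regularly_varying_def .
      then have "Limsup (at 1) ?H < ereal 2" by simp
      then have "eventually (\<lambda>C. ?H C < ereal 2) (at 1)" by (rule Limsup_lessD)
      then have "eventually (\<lambda>C. ?H C < ereal 2) (at_right 1)"
        by (simp add: eventually_at_split)
      then have "eventually (\<lambda>C. ?H C < ereal 2 \<and> 1 < C) (at_right (1::real))"
        using eventually_at_right_less[of "1::real"] by (rule eventually_conj)
      then obtain C where C: "?H C < ereal 2" "1 < C"
        using eventually_happens[of _ "at_right (1::real)"] by auto
      have evw: "eventually (\<lambda>w. ereal (P (C * w) / P w) < ereal 2) at_top"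
        using C(1) by (rule Limsup_lessD)
      have ev1: "eventually (\<lambda>x. ereal (P (C * v x) / P (v x)) < ereal 2) at_top"
        using filterlim_iff[THEN iffD1, OF v_top, rule_format, OF evw] .
      have ev2: "eventually (\<lambda>x. \<Phi> xbar < v x) at_top"
        using filterlim_at_top_dense[THEN iffD1, OF v_top, rule_format, of "\<Phi> xbar"] .
      define B where "B = (C * (t+1) + 1) / (C - 1)"
      have CB: "(C - 1) * B = C * (t+1) + 1" unfolding B_def using C(2) by simp
      have ev3: "eventually (\<lambda>x. \<phi> x \<le> C * v x) at_top"
        using phi_big[of B] filterlim_at_top[THEN iffD1, OF ln_at_top, rule_format, of "- C * ln c"]
          eventually_gt_at_top[of 1]
      proof eventually_elim
        case (elim x)
        have "(C - 1) * (B * ln x) \<le> (C - 1) * \<phi> x" using elim(1) C(2) by (intro mult_left_mono) auto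
        moreover have "(C - 1) * (B * ln x) = (C * (t+1) + 1) * ln x"
          by (simp only: mult.assoc[symmetric] CB)
        ultimately have h1: "(C * (t+1) + 1) * ln x \<le> (C - 1) * \<phi> x" by simp
        have h2: "C * v x = C * \<phi> x - C * (t+1) * ln x + C * ln c" unfolding v_def by (simp add: algebra_simps)
        have h3: "(C - 1) * \<phi> x = C * \<phi> x - \<phi> x" by (simp add: algebra_simps)
        have h4: "(C * (t+1) + 1) * ln x = C * (t+1) * ln x + ln x" by (simp add: algebra_simps)
        have h5: "- C * ln c \<le> ln x" using elim(2) .
        have h6: "- C * ln c = - (C * ln c)" by simp
        show ?case using h1 h2 h3 h4 h5 h6 by linarith
      qed
      have ev4: "eventually (\<lambda>x. x powr s \<le> kap * x / 2) at_top"
        using asymp_lin[OF s(1) s(2) kap(1)] .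
      show ?thesis using ev1 ev2 ev3 ev4 ph_ev kapev
      proof eventually_elim
        case (elim x)
        have Pv: "xbar \<le> P (v x)" using Pb elim(2) by simp
        then have Pvpos: "0 < P (v x)" using xbar_pos by simp
        have "P (C * v x) / P (v x) < 2" using elim(1) by simp
        then have "P (C * v x) < 2 * P (v x)" using Pvpos by (simp add: divide_less_eq)
        moreover have "P (\<phi> x) \<le> P (C * v x)" using Pm elim(5) elim(3) by blast
        ultimately have "kap * x < 2 * P (v x)" using elim(6) by linarith
        then show ?case using elim(4) by linarith
      qed
    qed
  qed
  have pos_inf: "(\<integral>\<^sup>+ x \<in> {0..}. ennreal (FF (g x / f x) * f x) \<partial>lborel) = \<infinity>"
  proof -
    have ev: "eventually (\<lambda>x. a * c / 2 / x \<le> FF (g x / f x) * f x) at_top"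
      using gtail phi_big[of 2] filterlim_at_top_dense[THEN iffD1, OF v_top, rule_format, of "\<Phi> xbar"] KEY
        eventually_ge_at_top[of 1] eventually_ge_at_top[of "2 * \<bar>b\<bar> / (a * c)"]
    proof eventually_elim
      case (elim x)
      have bb: "2 * \<bar>b\<bar> \<le> a * c * x" using elim a_pos cpos by (simp add: field_simps)
      have Feq': "\<And>y. y > exp (\<Phi> xbar) \<Longrightarrow> FF y = a * y * P (ln y) powr \<theta> + b"
        using Feq unfolding FF_def ybar_def by simp
      have th0: "0 < \<theta>" using theta by simp
      show ?case unfolding f_def
        by (rule pointwise_bound[OF elim(5) cpos a_pos th0 less_imp_le[OF s(1)] s(3) elim(1) elim(2)
              elim(3)[unfolded v_def] elim(4)[unfolded v_def] Pm bb Feq'])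
    qed
    then obtain X where X: "\<And>x. x \<ge> X \<Longrightarrow> a * c / 2 / x \<le> FF (g x / f x) * f x"
      by (auto simp: eventually_at_top_linorder)
    define X' where "X' = max X 1"
    have "\<infinity> = (\<integral>\<^sup>+x. ennreal (a * c / 2 / x) * indicator {X'..} x \<partial>lborel)"
      using nn_inv_x_inf[of "a * c / 2" X'] a_pos cpos unfolding X'_def by simp
    also have "\<dots> \<le> (\<integral>\<^sup>+ x \<in> {0..}. ennreal (FF (g x / f x) * f x) \<partial>lborel)"
    proof (rule nn_integral_mono)
      fix x
      show "ennreal (a * c / 2 / x) * indicator {X'..} x \<le> ennreal (FF (g x / f x) * f x) * indicator {0..} x"
      proof (cases "x \<in> {X'..}")
        case True
        then have "x \<ge> X" "x \<ge> 0" unfolding X'_def by auto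
        then show ?thesis using True X[of x] by (simp add: ennreal_leI)
      qed simp
    qed
    finally show ?thesis by (simp add: top_unique)
  qed
  show ?thesis
  proof -
    obtain r where r: "(\<integral>\<^sup>+ x \<in> {0..}. ennreal (- (FF (g x / f x) * f x)) \<partial>lborel) = ennreal r"
      using neg_fin by (cases "(\<integral>\<^sup>+ x \<in> {0..}. ennreal (- (FF (g x / f x) * f x)) \<partial>lborel)") auto
    show ?thesis unfolding F_div_def FF_def[symmetric] f_def[symmetric] using pos_inf r by simp
  qed
qed

end
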